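(* Let $T$ be a directed tree with root (source) $\rho$, let $R$ be a finite set of positive integers such that there exists a burning assignment $\phi:R\to V(T)$ with $V(T)=\bigcup_{r\in R}N^+_{r-1}(\phi(r))$, and let $s$ be a sink of $T$ whose distance $d(\rho,s)$ from $\rho$ is maximal among all sinks. Then either $d(\rho,s)\le \max(R)-1$, or there exist a burning assignment $\phi:R\to V(T)$ with $V(T)=\bigcup_{r\in R}N^+_{r-1}(\phi(r))$ and some $r\in R$ such that $\phi(r)$ is the node $v$ on the path from $\rho$ to $s$ with $d(v,s)=r-1$.
   Context: A directed tree is a rooted tree with a single source (the root) whose arcs are all directed away from the root. $d(u,w)$ denotes the directed distance (number of arcs of a shortest directed path) from $u$ to $w$. $N^+_k(v)$ is the set of nodes reachable from $v$ by a directed path with at most $k$ arcs (so $N^+_0(v)=\{v\}$). For a set $R$ of positive integers (burning ranges), a burning assignment is a map $\phi:R\to V(T)$; it burns $T$ if $V(T)=\bigcup_{r\in R}N^+_{r-1}(\phi(r))$. *)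

theory Defs
  imports Main
begin

definition directed_tree :: "'a set \<Rightarrow> ('a \<times> 'a) set \<Rightarrow> 'a \<Rightarrow> bool" where
  "directed_tree V E rho \<longleftrightarrow>
     finite V \<and> rho \<in> V \<and> E \<subseteq> V \<times> V \<and>
     (\<forall>v\<in>V. (rho, v) \<in> E\<^sup>*) \<and>
     (\<forall>u. (u, rho) \<notin> E) \<and>
     (\<forall>v\<in>V - {rho}. \<exists>!u. (u, v) \<in> E)"

definition ddist :: "('a \<times> 'a) set \<Rightarrow> 'a \<Rightarrow> 'a \<Rightarrow> nat" where
  "ddist E u w = (LEAST k. (u, w) \<in> E ^^ k)"

definition out_nbhd :: "('a \<times> 'a) set \<Rightarrow> nat \<Rightarrow> 'a \<Rightarrow> 'a set" where
  "out_nbhd E k v = {w. \<exists>j\<le>k. (v, w) \<in> E ^^ j}"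

definition burns :: "'a set \<Rightarrow> ('a \<times> 'a) set \<Rightarrow> nat set \<Rightarrow> (nat \<Rightarrow> 'a) \<Rightarrow> bool" where
  "burns V E R phi \<longleftrightarrow> (\<forall>r\<in>R. phi r \<in> V) \<and> V = (\<Union>r\<in>R. out_nbhd E (r - 1) (phi r))"

definition is_sink :: "'a set \<Rightarrow> ('a \<times> 'a) set \<Rightarrow> 'a \<Rightarrow> bool" where
  "is_sink V E s \<longleftrightarrow> s \<in> V \<and> (\<forall>w. (s, w) \<notin> E)"

end

theory Submission
  imports Defs
begin

lemma dt_parts:
  assumes "directed_tree V E rho"
  shows "finite V" "rho \<in> V" "E \<subseteq> V \<times> V" "\<And>v. v \<in> V \<Longrightarrow> (rho, v) \<in> E\<^sup>*"
    "\<And>u. (u, rho) \<notin> E" "\<And>v u u'. (u, v) \<in> E \<Longrightarrow> (u', v) \<in> E \<Longrightarrow> u = u'"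
proof -
  show "finite V" "rho \<in> V" "E \<subseteq> V \<times> V" "\<And>v. v \<in> V \<Longrightarrow> (rho, v) \<in> E\<^sup>*"
    "\<And>u. (u, rho) \<notin> E" using assms unfolding directed_tree_def by auto
  fix v u u' assume a: "(u, v) \<in> E" "(u', v) \<in> E"
  have "v \<in> V - {rho}" using assms a unfolding directed_tree_def by auto
  then have "\<exists>!u. (u, v) \<in> E" using assms unfolding directed_tree_def by blast
  then show "u = u'" using a by blast
qed

lemma reach_V:
  assumes "directed_tree V E rho" "(x, y) \<in> E\<^sup>*" "x \<in> V"
  shows "y \<in> V"
  using assms(2,3)
proof (induction rule: rtrancl_induct)
  case base then show ?case by simp
next
  case (step y z) then show ?case using dt_parts(3)[OF assms(1)] by auto
qed

lemma anc_unique: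
  assumes "directed_tree V E rho"
  shows "(x, y) \<in> E ^^ k \<Longrightarrow> (x', y) \<in> E ^^ k \<Longrightarrow> x = x'"
proof (induction k arbitrary: y)
  case 0 then show ?case by simp
next
  case (Suc k)
  from Suc.prems(1) obtain z where z: "(x, z) \<in> E ^^ k" "(z, y) \<in> E" by auto
  from Suc.prems(2) obtain z' where z': "(x', z') \<in> E ^^ k" "(z', y) \<in> E" by auto
  have "z = z'" using dt_parts(6)[OF assms] z z' by blast
  then show ?case using Suc.IH z z' by blast
qed

lemma root_len_unique:
  assumes "directed_tree V E rho"
  shows "(rho, y) \<in> E ^^ n \<Longrightarrow> (rho, y) \<in> E ^^ m \<Longrightarrow> n = m"
proof (induction n arbitrary: y m)
  case 0
  then have "y = rho" by simp
  show ?case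
  proof (cases m)
    case 0 then show ?thesis by simp
  next
    case (Suc m')
    then obtain z where "(z, y) \<in> E" using 0 by auto
    then show ?thesis using \<open>y = rho\<close> dt_parts(5)[OF assms] by blast
  qed
next
  case (Suc n)
  from Suc.prems(1) obtain z where z: "(rho, z) \<in> E ^^ n" "(z, y) \<in> E" by auto
  show ?case
  proof (cases m)
    case 0
    then have "y = rho" using Suc.prems(2) by simp
    then show ?thesis using z dt_parts(5)[OF assms] by blast
  next
    case (Suc m')
    then obtain z' where z': "(rho, z') \<in> E ^^ m'" "(z', y) \<in> E" using Suc.prems(2) by auto
    have "z = z'" using dt_parts(6)[OF assms] z z' by blast
    then show ?thesis using Suc.IH z z' \<open>m = Suc m'\<close> by blast
  qed
qed

lemma ddist_eq:
  assumes "directed_tree V E rho" "x \<in> V" "(x, y) \<in> E ^^ k"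
  shows "ddist E x y = k"
proof -
  obtain a where a: "(rho, x) \<in> E ^^ a"
    using dt_parts(4)[OF assms(1) assms(2)] rtrancl_power by blast
  have "m = k" if "(x, y) \<in> E ^^ m" for m
  proof -
    have "(rho, y) \<in> E ^^ (a + m)" using a that relpow_add by blast
    moreover have "(rho, y) \<in> E ^^ (a + k)" using a assms(3) relpow_add by blast
    ultimately show ?thesis using root_len_unique[OF assms(1)] by fastforce
  qed
  then show ?thesis unfolding ddist_def using assms(3)
    by (metis (mono_tags, lifting) LeastI)
qed

lemma max_depth:
  assumes tree: "directed_tree V E rho"
    and maxsink: "\<forall>s'. is_sink V E s' \<longrightarrow> ddist E rho s' \<le> D"
    and w: "w \<in> V"
  shows "ddist E rho w \<le> D"
proof -
  define S where "S = {z. (w, z) \<in> E\<^sup>*}"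
  have SV: "S \<subseteq> V" using reach_V[OF tree _ w] S_def by auto
  then have fS: "finite S" using dt_parts(1)[OF tree] finite_subset by blast
  have wS: "w \<in> S" using S_def by simp
  define dep where "dep = ddist E rho"
  have "Max (dep ` S) \<in> dep ` S" using fS wS by (intro Max_in) auto
  then obtain w' where w': "w' \<in> S" "dep w' = Max (dep ` S)" by auto
  have w'V: "w' \<in> V" using w' SV by auto
  obtain a where a: "(rho, w') \<in> E ^^ a"
    using dt_parts(4)[OF tree w'V] rtrancl_power by blast
  have "is_sink V E w'"
    unfolding is_sink_def
  proof (intro conjI allI w'V notI)
    fix z assume z: "(w', z) \<in> E"
    then have zS: "z \<in> S" using w'(1) S_def by auto
    have "(rho, z) \<in> E ^^ Suc a" using a z by auto
    then have "dep z = Suc a" using ddist_eq[OF tree dt_parts(2)[OF tree]] dep_def by blast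
    moreover have "dep w' = a" using ddist_eq[OF tree dt_parts(2)[OF tree] a] dep_def by blast
    moreover have "dep z \<le> Max (dep ` S)" using fS zS by auto
    ultimately show False using w'(2) by simp
  qed
  then have "dep w' \<le> D" using maxsink dep_def by blast
  moreover have "dep w \<le> dep w'" using fS wS w'(2) by auto
  ultimately show ?thesis using dep_def by simp
qed

lemma nbhd_V:
  assumes "directed_tree V E rho" "x \<in> V"
  shows "out_nbhd E k x \<subseteq> V"
  using reach_V[OF assms(1) _ assms(2)] relpow_imp_rtrancl unfolding out_nbhd_def by blast

theorem mainTheorem9:
  fixes V :: "'a set" and E :: "('a \<times> 'a) set" and rho s :: 'a and R :: "nat set"
  assumes tree: "directed_tree V E rho"
    and finR: "finite R" and posR: "\<forall>r\<in>R. 0 < r"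
    and burnable: "\<exists>phi. burns V E R phi"
    and sink: "is_sink V E s"
    and maxsink: "\<forall>s'. is_sink V E s' \<longrightarrow> ddist E rho s' \<le> ddist E rho s"
  shows "ddist E rho s \<le> Max R - 1 \<or>
         (\<exists>phi. burns V E R phi \<and>
            (\<exists>r\<in>R. (rho, phi r) \<in> E\<^sup>* \<and> (phi r, s) \<in> E\<^sup>* \<and> ddist E (phi r) s = r - 1))"
proof (cases "ddist E rho s \<le> Max R - 1")
  case True then show ?thesis by simp
next
  case False
  define D where "D = ddist E rho s"
  from False have DR: "\<not> D \<le> Max R - 1" using D_def by simp
  obtain phi where phi: "burns V E R phi" using burnable by blast
  have sV: "s \<in> V" using sink unfolding is_sink_def by auto
  then obtain r where r: "r \<in> R" "s \<in> out_nbhd E (r - 1) (phi r)"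
    using phi unfolding burns_def by blast
  define u where "u = phi r"
  have uV: "u \<in> V" using phi r u_def unfolding burns_def by auto
  obtain j where j: "j \<le> r - 1" "(u, s) \<in> E ^^ j" using r(2) u_def unfolding out_nbhd_def by auto
  obtain a where a: "(rho, u) \<in> E ^^ a"
    using dt_parts(4)[OF tree uV] rtrancl_power by blast
  have rhos: "(rho, s) \<in> E ^^ (a + j)" using a j relpow_add by blast
  have Daj: "D = a + j" using ddist_eq[OF tree dt_parts(2)[OF tree] rhos] D_def by simp
  have "r \<le> Max R" using finR r(1) by simp
  then have rD: "r - 1 \<le> D" using DR by simp
  have "(rho, s) \<in> E ^^ ((D - (r - 1)) + (r - 1))" using rhos Daj rD by simp
  then obtain v where v: "(rho, v) \<in> E ^^ (D - (r - 1))" "(v, s) \<in> E ^^ (r - 1)"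
    unfolding relpow_add by blast
  have "(v, s) \<in> E ^^ ((r - 1 - j) + j)" proof - have "(r - 1 - j) + j = r - 1" using j(1) by simp then show ?thesis using v(2) by simp qed
  then obtain w where w: "(v, w) \<in> E ^^ (r - 1 - j)" "(w, s) \<in> E ^^ j"
    unfolding relpow_add by blast
  have "w = u" using anc_unique[OF tree w(2) j(2)] .
  then have vu: "(v, u) \<in> E ^^ (r - 1 - j)" using w(1) by simp
  have vV: "v \<in> V" using reach_V[OF tree _ dt_parts(2)[OF tree]] v(1) relpow_imp_rtrancl by blast
  define phi' where "phi' = phi(r := v)"
  have cov: "out_nbhd E (r - 1) u \<subseteq> out_nbhd E (r - 1) v"
  proof
    fix x assume "x \<in> out_nbhd E (r - 1) u"
    then obtain i where i: "i \<le> r - 1" "(u, x) \<in> E ^^ i" unfolding out_nbhd_def by auto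
    have "(rho, x) \<in> E ^^ (a + i)" using a i(2) relpow_add by blast
    then have "ddist E rho x = a + i" using ddist_eq[OF tree dt_parts(2)[OF tree]] by blast
    moreover have "x \<in> V" using reach_V[OF tree _ uV] i(2) relpow_imp_rtrancl by blast
    ultimately have "a + i \<le> D" using max_depth[OF tree] maxsink D_def by metis
    then have ij: "i \<le> j" using Daj by simp
    have "(v, x) \<in> E ^^ ((r - 1 - j) + i)" using vu i(2) relpow_add by blast
    moreover have "(r - 1 - j) + i \<le> r - 1" using ij j(1) by simp
    ultimately show "x \<in> out_nbhd E (r - 1) v" unfolding out_nbhd_def by blast
  qed
  have burns': "burns V E R phi'"
    unfolding burns_def
  proof (intro conjI)
    show "\<forall>r\<in>R. phi' r \<in> V" using phi vV unfolding burns_def phi'_def by auto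
    show "V = (\<Union>r\<in>R. out_nbhd E (r - 1) (phi' r))"
    proof
      show "V \<subseteq> (\<Union>r\<in>R. out_nbhd E (r - 1) (phi' r))"
      proof
        fix x assume "x \<in> V"
        then obtain r' where r': "r' \<in> R" "x \<in> out_nbhd E (r' - 1) (phi r')"
          using phi unfolding burns_def by blast
        show "x \<in> (\<Union>r\<in>R. out_nbhd E (r - 1) (phi' r))"
        proof (cases "r' = r")
          case True
          then have "x \<in> out_nbhd E (r - 1) (phi' r)" using r' cov u_def phi'_def by auto
          then show ?thesis using r(1) by blast
        next
          case False
          then show ?thesis using r' phi'_def by auto
        qed
      qed
      show "(\<Union>r\<in>R. out_nbhd E (r - 1) (phi' r)) \<subseteq> V"
      proof (rule UN_least)
        fix r' assume "r' \<in> R"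
        then have "phi' r' \<in> V" using phi vV unfolding burns_def phi'_def by auto
        then show "out_nbhd E (r' - 1) (phi' r') \<subseteq> V" using nbhd_V[OF tree] by blast
      qed
    qed
  qed
  have "(rho, phi' r) \<in> E\<^sup>*" using v(1) phi'_def relpow_imp_rtrancl by auto
  moreover have "(phi' r, s) \<in> E\<^sup>*" using v(2) phi'_def relpow_imp_rtrancl by auto
  moreover have "ddist E (phi' r) s = r - 1" using ddist_eq[OF tree vV v(2)] phi'_def by simp
  ultimately show ?thesis
    using burns' r(1) by blast
qed

end
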